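(* Let $\mathcal N_3$ be a simple 3-level network and let $\mathcal N_2$ be the simple 2-level network associated to it. Let $\mathcal U_3$ and $\mathcal U_2$ be the sets of edges incident with the sources of $\mathcal N_3$ and $\mathcal N_2$, respectively, and let $\mathbf A_{\mathcal N_3},\mathbf A_{\mathcal N_2}$ be adversaries able to corrupt up to $t$ edges of $\mathcal U_3$ and of $\mathcal U_2$, respectively. Then for every alphabet $\mathcal A$ and every positive integer $i$, \[C_i(\mathcal N_3,\mathcal A,\mathbf A_{\mathcal N_3})\le C_i(\mathcal N_2,\mathcal A,\mathbf A_{\mathcal N_2}).\]
   Context: An alphabet is a finite set $\mathcal A$ with $|\mathcal A|\ge2$. A simple 3-level network is a directed acyclic multigraph with a source $S$, a single terminal $T$, and intermediate nodes partitioned into $L_1,L_2$, such that every edge goes from $S$ to $L_1$, from $L_1$ to $L_2$, or from $L_2$ to $T$ (so every $S$–$T$ path has length 3), and every intermediate node lies on some $S$–$T$ path. Let $G^{3,2}$ be the (undirected) graph on $L_1\cup L_2$ whose edges are the edges of $\mathcal N_3$ between $L_1$ and $L_2$, with connected components $K_1,\dots,K_n$. The associated simple 2-level network $\mathcal N_2$ has source $S$, intermediate nodes $V_1,\dots,V_n$ (one per component), terminal $T$, $a_j$ parallel edges $S\to V_j$ and $b_j$ parallel edges $V_j\to T$, where $a_j$ (resp. $b_j$) is the number of edges of $\mathcal N_3$ from $S$ into $K_j$ (resp. from $K_j$ to $T$). In a network each edge carries one symbol of $\mathcal A$; a network code assigns to each intermediate node $V$ a function $\mathcal A^{\deg^-(V)}\to\mathcal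 A^{\deg^+(V)}$ mapping the symbols on its incoming edges to those on its outgoing edges. In one use, the source sends $x\in\mathcal A^{\deg^+(S)}$, the adversary may replace symbols on up to $t$ edges of the given vulnerable set by arbitrary symbols, and values propagate via the network code; the fan-out set $\Omega(x)$ is the set of all vectors the terminal can receive. For $i$ uses with the same network code, the fan-out set of $(x^1,\dots,x^i)$ is $\Omega(x^1)\times\dots\times\Omega(x^i)$. A nonempty code $C\subseteq(\mathcal A^{\deg^+(S)})^i$ is unambiguous if distinct codewords have disjoint fan-out sets, and $C_i$ is the maximum of $\log_{|\mathcal A|}(|C|)/i$ over network codes and unambiguous codes. *)

theory Defs
  imports Complex_Main "HOL-Library.Multiset"
begin

definition vecs :: "'a set \<Rightarrow> nat \<Rightarrow> 'a list set" where
  "vecs A m = {x. length x = m \<and> set x \<subseteq> A}"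

definition hamming :: "'a list \<Rightarrow> 'a list \<Rightarrow> nat" where
  "hamming x y = card {j. j < length x \<and> x ! j \<noteq> y ! j}"

text \<open>A layer of a layered network: incoming edges (into this layer's nodes) are
  described by the list hin of their head nodes, outgoing edges by the list tout
  of their tail nodes. A layer map assigns to every intermediate node of the layer
  a function from the symbols on its incoming edges to the symbols on its outgoing
  edges; globally this is a map F : A^|hin| -> A^|tout| whose value on an outgoing
  edge e only depends on the incoming edges of the tail node of e.\<close>
definition layer_map ::
  "'a set \<Rightarrow> nat list \<Rightarrow> nat list \<Rightarrow> ('a list \<Rightarrow> 'a list) \<Rightarrow> bool" where
  "layer_map A hin tout F \<longleftrightarrow>
     (\<forall>x \<in> vecs A (length hin). F x \<in> vecs A (length tout)) \<and>
     (\<forall>x \<in> vecs A (length hin). \<forall>y \<in> vecs A (length hin). \<forall>e < length tout.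
        (\<forall>j < length hin. hin ! j = tout ! e \<longrightarrow> x ! j = y ! j) \<longrightarrow> F x ! e = F y ! e)"

text \<open>Adversary corrupting up to t of the source edges (all m edges leaving S);
  Phi is the global transfer map of a network code.\<close>
definition fanout :: "'a set \<Rightarrow> nat \<Rightarrow> nat \<Rightarrow> ('a list \<Rightarrow> 'b) \<Rightarrow> 'a list \<Rightarrow> 'b set" where
  "fanout A m t Phi x = {Phi y | y. y \<in> vecs A m \<and> hamming x y \<le> t}"

definition fanout_uses ::
  "'a set \<Rightarrow> nat \<Rightarrow> nat \<Rightarrow> ('a list \<Rightarrow> 'b) \<Rightarrow> 'a list list \<Rightarrow> 'b list set" where
  "fanout_uses A m t Phi xs =
     {zs. length zs = length xs \<and> (\<forall>k < length xs. zs ! k \<in> fanout A m t Phi (xs ! k))}"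

definition unambiguous ::
  "'a set \<Rightarrow> nat \<Rightarrow> nat \<Rightarrow> ('a list \<Rightarrow> 'b) \<Rightarrow> nat \<Rightarrow> 'a list list set \<Rightarrow> bool" where
  "unambiguous A m t Phi i C \<longleftrightarrow>
     C \<noteq> {} \<and>
     C \<subseteq> {xs. length xs = i \<and> (\<forall>k < i. xs ! k \<in> vecs A m)} \<and>
     (\<forall>xs \<in> C. \<forall>ys \<in> C. xs \<noteq> ys \<longrightarrow>
        fanout_uses A m t Phi xs \<inter> fanout_uses A m t Phi ys = {})"

definition capacity ::
  "'a set \<Rightarrow> nat \<Rightarrow> nat \<Rightarrow> ('a list \<Rightarrow> 'b) set \<Rightarrow> nat \<Rightarrow> real" where
  "capacity A m t Codes i =
     Max {log (real (card A)) (real (card C)) / real i | Phi C.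
            Phi \<in> Codes \<and> unambiguous A m t Phi i C}"

text \<open>L1 = {0..<n1}, L2 = {0..<n2}. s3 lists the source edges by their head in L1,
  m3 lists the L1->L2 edges as (tail, head), t3 lists the edges into T by their
  tail in L2 (multigraph: repeated entries are parallel edges).\<close>
definition simple3 :: "nat \<Rightarrow> nat \<Rightarrow> nat list \<Rightarrow> (nat \<times> nat) list \<Rightarrow> nat list \<Rightarrow> bool" where
  "simple3 n1 n2 s3 m3 t3 \<longleftrightarrow>
     (\<forall>v \<in> set s3. v < n1) \<and> (\<forall>(v, w) \<in> set m3. v < n1 \<and> w < n2) \<and>
     (\<forall>w \<in> set t3. w < n2) \<and>
     (\<forall>v < n1. \<exists>w. v \<in> set s3 \<and> (v, w) \<in> set m3 \<and> w \<in> set t3) \<and>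
     (\<forall>w < n2. \<exists>v. v \<in> set s3 \<and> (v, w) \<in> set m3 \<and> w \<in> set t3)"

definition codes3 :: "'a set \<Rightarrow> nat list \<Rightarrow> (nat \<times> nat) list \<Rightarrow> nat list \<Rightarrow> ('a list \<Rightarrow> 'a list) set" where
  "codes3 A s3 m3 t3 = {F2 \<circ> F1 | F1 F2.
      layer_map A s3 (map fst m3) F1 \<and> layer_map A (map snd m3) t3 F2}"

text \<open>Simple 2-level network: intermediate nodes {0..<n}; s2 lists source edges by head,
  t2 lists terminal edges by tail.\<close>
definition codes2 :: "'a set \<Rightarrow> nat list \<Rightarrow> nat list \<Rightarrow> ('a list \<Rightarrow> 'a list) set" where
  "codes2 A s2 t2 = {F. layer_map A s2 t2 F}"

text \<open>The graph G^{3,2} on L1 + L2 (Inl = L1, Inr = L2).\<close>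
definition G32_adj :: "(nat \<times> nat) list \<Rightarrow> (nat + nat) \<Rightarrow> (nat + nat) \<Rightarrow> bool" where
  "G32_adj m3 u u' \<longleftrightarrow> (\<exists>(v, w) \<in> set m3. (u = Inl v \<and> u' = Inr w) \<or> (u = Inr w \<and> u' = Inl v))"

definition G32_conn :: "(nat \<times> nat) list \<Rightarrow> (nat + nat) \<Rightarrow> (nat + nat) \<Rightarrow> bool" where
  "G32_conn m3 = (G32_adj m3)\<^sup>*\<^sup>*"

definition G32_vertices :: "nat \<Rightarrow> nat \<Rightarrow> (nat + nat) set" where
  "G32_vertices n1 n2 = Inl ` {0..<n1} \<union> Inr ` {0..<n2}"

text \<open>(n, s2, t2) is the simple 2-level network associated to the 3-level network:
  some labelling c of the vertices of G^{3,2} by {0..<n} identifies the connected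
  components K_1..K_n with V_0..V_{n-1}; V_j has exactly a_j incoming edges from S
  (a_j = number of source edges into K_j) and b_j outgoing edges to T.\<close>
definition assoc2 ::
  "nat \<Rightarrow> nat \<Rightarrow> nat list \<Rightarrow> (nat \<times> nat) list \<Rightarrow> nat list \<Rightarrow> nat \<Rightarrow> nat list \<Rightarrow> nat list \<Rightarrow> bool" where
  "assoc2 n1 n2 s3 m3 t3 n s2 t2 \<longleftrightarrow>
     (\<exists>c :: nat + nat \<Rightarrow> nat.
        c ` G32_vertices n1 n2 = {0..<n} \<and>
        (\<forall>u \<in> G32_vertices n1 n2. \<forall>u' \<in> G32_vertices n1 n2. c u = c u' \<longleftrightarrow> G32_conn m3 u u') \<and>
        mset s2 = mset (map (\<lambda>v. c (Inl v)) s3) \<and>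
        mset t2 = mset (map (\<lambda>w. c (Inr w)) t3))"

end

theory Submission
  imports Defs "HOL-Combinatorics.Permutations"
begin

lemma perm_obtain:
  assumes "mset xs = mset ys"
  obtains p where "bij_betw p {..<length xs} {..<length xs}" "length ys = length xs"
    "\<forall>j<length xs. xs ! j = ys ! (p j)"
proof -
  have l: "length ys = length xs" using assms by (metis size_mset)
  from mset_eq_permutation[OF assms] obtain f where
    f: "f permutes {..<length ys}" "permute_list f ys = xs" by blast
  have "bij_betw f {..<length xs} {..<length xs}" using permutes_imp_bij[OF f(1)] l by simp
  moreover have "\<forall>i<length xs. xs ! i = ys ! (f i)"
    using f l by (metis permute_list_nth)
  ultimately have "bij_betw f {..<length xs} {..<length xs} \<and> (\<forall>i<length xs. xs ! i = ys ! (f i))" by blast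
  then show ?thesis using that l by auto
qed

lemma finite_codes:
  assumes "finite A"
  shows "finite {xs. length xs = i \<and> (\<forall>k < i. xs ! k \<in> vecs A m)}"
proof -
  have fv: "finite (vecs A m)" unfolding vecs_def
    using finite_lists_length_eq[OF assms, of m] by (simp add: conj_commute)
  have "{xs. length xs = i \<and> (\<forall>k < i. xs ! k \<in> vecs A m)} \<subseteq> {xs. set xs \<subseteq> vecs A m \<and> length xs = i}"
    by (auto simp: in_set_conv_nth)
  then show ?thesis using finite_lists_length_eq[OF fv, of i] finite_subset by blast
qed

lemma const_layer:
  assumes "a \<in> A"
  shows "layer_map A hin tout (\<lambda>x. replicate (length tout) a)"
  using assms unfolding layer_map_def vecs_def by auto

theorem mainTheorem5:
  fixes A :: "'a set" and n1 n2 n t i :: nat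
    and s3 t3 s2 t2 :: "nat list" and m3 :: "(nat \<times> nat) list"
  assumes "finite A" and "card A \<ge> 2"
    and "simple3 n1 n2 s3 m3 t3"
    and "assoc2 n1 n2 s3 m3 t3 n s2 t2"
    and "i > 0"
  shows "capacity A (length s3) t (codes3 A s3 m3 t3) i
           \<le> capacity A (length s2) t (codes2 A s2 t2) i"
proof -
  define m where "m = length s3"
  define r where "r = length t3"
  obtain c :: "nat + nat \<Rightarrow> nat" where
    cv: "\<forall>u \<in> G32_vertices n1 n2. \<forall>u' \<in> G32_vertices n1 n2. c u = c u' \<longleftrightarrow> G32_conn m3 u u'"
    and cs: "mset s2 = mset (map (\<lambda>v. c (Inl v)) s3)"
    and ct: "mset t2 = mset (map (\<lambda>w. c (Inr w)) t3)"
    using assms(4) unfolding assoc2_def by blast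
  have s3' : "\<forall>(v, w) \<in> set m3. v < n1 \<and> w < n2" using assms(3) unfolding simple3_def by blast
  have comp: "c (Inl v) = c (Inr w)" if "(v, w) \<in> set m3" for v w
  proof -
    have "v < n1" "w < n2" using s3' that by auto
    then have "Inl v \<in> G32_vertices n1 n2" "Inr w \<in> G32_vertices n1 n2"
      unfolding G32_vertices_def by auto
    moreover have "G32_conn m3 (Inl v) (Inr w)"
      unfolding G32_conn_def using that by (intro r_into_rtranclp) (auto simp: G32_adj_def)
    ultimately show ?thesis using cv by blast
  qed
  obtain p where pb: "bij_betw p {..<m} {..<m}" and ls2: "length s2 = m"
    and ps: "\<forall>j<m. s2 ! j = c (Inl (s3 ! p j))"
  proof -
    obtain p where "bij_betw p {..<length s2} {..<length s2}"
      "length (map (\<lambda>v. c (Inl v)) s3) = length s2"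
      "\<forall>j<length s2. s2 ! j = (map (\<lambda>v. c (Inl v)) s3) ! (p j)"
      using perm_obtain[OF cs] by blast
    moreover then have "length s2 = m" by (simp add: m_def)
    ultimately show ?thesis using that[of p] bij_betw_apply by fastforce
  qed
  obtain q where qb: "bij_betw q {..<r} {..<r}" and lt2: "length t2 = r"
    and qt: "\<forall>e<r. t2 ! e = c (Inr (t3 ! q e))"
  proof -
    obtain q where "bij_betw q {..<length t2} {..<length t2}"
      "length (map (\<lambda>v. c (Inr v)) t3) = length t2"
      "\<forall>j<length t2. t2 ! j = (map (\<lambda>v. c (Inr v)) t3) ! (q j)"
      using perm_obtain[OF ct] by blast
    moreover then have "length t2 = r" by (simp add: r_def)
    ultimately show ?thesis using that[of q] bij_betw_apply by fastforce
  qed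
  define pinv where "pinv = inv_into {..<m} p"
  define qinv where "qinv = inv_into {..<r} q"
  have pinvb: "bij_betw pinv {..<m} {..<m}" unfolding pinv_def using pb bij_betw_inv_into by blast
  have qinvb: "bij_betw qinv {..<r} {..<r}" unfolding qinv_def using qb bij_betw_inv_into by blast
  have p1: "pinv (p j) = j" if "j < m" for j
    unfolding pinv_def using bij_betw_inv_into_left[OF pb] that by auto
  have p2: "p (pinv j) = j" if "j < m" for j
    unfolding pinv_def using bij_betw_inv_into_right[OF pb] that by auto
  have q1: "qinv (q j) = j" if "j < r" for j
    unfolding qinv_def using bij_betw_inv_into_left[OF qb] that by auto
  have q2: "q (qinv j) = j" if "j < r" for j
    unfolding qinv_def using bij_betw_inv_into_right[OF qb] that by auto
  have pl: "p j < m" if "j < m" for j using pb that bij_betw_apply by fastforce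
  have pil: "pinv j < m" if "j < m" for j using pinvb that bij_betw_apply by fastforce
  have ql: "q j < r" if "j < r" for j using qb that bij_betw_apply by fastforce
  have qil: "qinv j < r" if "j < r" for j using qinvb that bij_betw_apply by fastforce
  define perm where "perm x = map (\<lambda>j. x ! p j) [0..<m]" for x :: "'a list"
  define unperm where "unperm y = map (\<lambda>k. y ! pinv k) [0..<m]" for y :: "'a list"
  define Q where "Q z = map (\<lambda>e. z ! q e) [0..<r]" for z :: "'a list"
  define unQ where "unQ z = map (\<lambda>e. z ! qinv e) [0..<r]" for z :: "'a list"
  have up: "unperm (perm x) = x" if "length x = m" for x
    using that unfolding unperm_def perm_def by (intro nth_equalityI) (simp_all add: pil p2)
  have uQ: "unQ (Q z) = z" if "length z = r" for z
    using that unfolding unQ_def Q_def by (intro nth_equalityI) (simp_all add: qil q2)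

  have permv: "perm x \<in> vecs A m" if "x \<in> vecs A m" for x
    using that unfolding vecs_def perm_def by (auto, metis pl nth_mem subsetD)
  have unpermv: "unperm y \<in> vecs A m" if "y \<in> vecs A m" for y
    using that unfolding vecs_def unperm_def by (auto, metis pil nth_mem subsetD)
  have ham: "hamming x (unperm y) = hamming (perm x) y" if "length x = m" "length y = m" for x y
  proof -
    have "{k. k < length x \<and> x ! k \<noteq> unperm y ! k} = p ` {j. j < length (perm x) \<and> perm x ! j \<noteq> y ! j}"
    proof (rule set_eqI, rule iffI)
      fix k assume k: "k \<in> {k. k < length x \<and> x ! k \<noteq> unperm y ! k}"
      then have "k = p (pinv k)" "pinv k < m" using that p2 pil by auto
      moreover have "perm x ! pinv k \<noteq> y ! pinv k" using k that p2 pil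
        by (auto simp add: perm_def unperm_def)
      ultimately show "k \<in> p ` {j. j < length (perm x) \<and> perm x ! j \<noteq> y ! j}"
        by (auto simp: perm_def)
    next
      fix k assume "k \<in> p ` {j. j < length (perm x) \<and> perm x ! j \<noteq> y ! j}"
      then obtain j where j: "k = p j" "j < m" "x ! p j \<noteq> y ! j" by (auto simp: perm_def)
      then show "k \<in> {k. k < length x \<and> x ! k \<noteq> unperm y ! k}"
        using that pl p1 by (auto simp: unperm_def)
    qed
    moreover have "inj_on p {j. j < length (perm x) \<and> perm x ! j \<noteq> y ! j}"
      using bij_betw_imp_inj_on[OF pb] by (rule inj_on_subset) (auto simp: perm_def)
    ultimately show ?thesis unfolding hamming_def by (simp add: card_image)
  qed
  have claim: "\<exists>Phi2 C2. Phi2 \<in> codes2 A s2 t2 \<and> unambiguous A m t Phi2 i C2 \<and> card C2 = card C"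
    if Phi: "Phi \<in> codes3 A s3 m3 t3" and C: "unambiguous A m t Phi i C" for Phi C
  proof -
    obtain F1 F2 where PhiF: "Phi = F2 \<circ> F1" and L1: "layer_map A s3 (map fst m3) F1"
      and L2: "layer_map A (map snd m3) t3 F2" using Phi unfolding codes3_def by blast
    have Phiv: "Phi x \<in> vecs A r" if "x \<in> vecs A m" for x
      using L1 L2 that unfolding layer_map_def PhiF m_def r_def by simp
    have L1v: "\<And>x. x \<in> vecs A (length s3) \<Longrightarrow> F1 x \<in> vecs A (length (map snd m3))"
      using L1 unfolding layer_map_def by simp
    have L1loc: "\<And>x y e. x \<in> vecs A (length s3) \<Longrightarrow> y \<in> vecs A (length s3) \<Longrightarrow>
        (\<forall>j < length s3. s3 ! j = map fst m3 ! e \<longrightarrow> x ! j = y ! j) \<Longrightarrow> e < length m3 \<Longrightarrow>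
        F1 x ! e = F1 y ! e"
      using L1 unfolding layer_map_def by (metis length_map)
    have L2loc: "\<And>x y e. x \<in> vecs A (length (map snd m3)) \<Longrightarrow> y \<in> vecs A (length (map snd m3)) \<Longrightarrow>
        e < length t3 \<Longrightarrow>
        (\<forall>j < length m3. map snd m3 ! j = t3 ! e \<longrightarrow> x ! j = y ! j) \<Longrightarrow>
        F2 x ! e = F2 y ! e"
      using L2 unfolding layer_map_def by (metis length_map)
    define Phi2 where "Phi2 y = Q (Phi (unperm y))" for y
    have "layer_map A s2 t2 Phi2"
      unfolding layer_map_def
    proof (intro conjI ballI allI impI)
      fix y assume "y \<in> vecs A (length s2)"
      then have "Phi (unperm y) \<in> vecs A r" using Phiv unpermv ls2 by simp
      then show "Phi2 y \<in> vecs A (length t2)" unfolding Phi2_def Q_def vecs_def lt2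
        by (auto, metis ql nth_mem subsetD)
    next
      fix y y' e assume y: "y \<in> vecs A (length s2)" and y': "y' \<in> vecs A (length s2)"
        and e: "e < length t2" and H: "\<forall>j<length s2. s2 ! j = t2 ! e \<longrightarrow> y ! j = y' ! j"
      define x where "x = unperm y"
      define x' where "x' = unperm y'"
      have xv: "x \<in> vecs A (length s3)" "x' \<in> vecs A (length s3)"
        using unpermv y y' ls2 unfolding x_def x'_def m_def by auto
      have er: "e < r" using e lt2 by simp
      have F1eq: "F1 x ! j' = F1 x' ! j'" if j': "j' < length m3" "snd (m3 ! j') = t3 ! q e" for j'
      proof -
        have "\<forall>k<length s3. s3 ! k = map fst m3 ! j' \<longrightarrow> x ! k = x' ! k"
        proof (intro allI impI)
          fix k assume k: "k < length s3" "s3 ! k = map fst m3 ! j'"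
          have km: "k < m" using k m_def by simp
          have "(fst (m3 ! j'), snd (m3 ! j')) \<in> set m3" using j'(1) by simp
          then have cc: "c (Inl (fst (m3 ! j'))) = c (Inr (snd (m3 ! j')))" by (rule comp)
          have "s2 ! pinv k = c (Inl (s3 ! k))" using ps pil p2 km by simp
          also have "\<dots> = t2 ! e" using k j' cc qt er by simp
          finally have "y ! pinv k = y' ! pinv k" using H pil km ls2 by simp
          then show "x ! k = x' ! k" using km by (simp add: x_def x'_def unperm_def)
        qed
        then show ?thesis using L1loc[OF xv] j'(1) by simp
      qed
      have F1v: "F1 x \<in> vecs A (length (map snd m3))" "F1 x' \<in> vecs A (length (map snd m3))"
        using L1v xv by auto
      have qe: "q e < length t3" using ql er r_def by simp
      have "F2 (F1 x) ! q e = F2 (F1 x') ! q e"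
        using L2loc[OF F1v qe] F1eq by simp
      then show "Phi2 y ! e = Phi2 y' ! e"
        using er by (simp add: Phi2_def Q_def PhiF x_def x'_def)
    qed
    then have P2: "Phi2 \<in> codes2 A s2 t2" unfolding codes2_def by simp
    have Cne: "C \<noteq> {}" and Cs: "C \<subseteq> {xs. length xs = i \<and> (\<forall>k < i. xs ! k \<in> vecs A m)}"
      and Cd: "\<And>xs ys. xs \<in> C \<Longrightarrow> ys \<in> C \<Longrightarrow> xs \<noteq> ys \<Longrightarrow>
        fanout_uses A m t Phi xs \<inter> fanout_uses A m t Phi ys = {}"
      using C unfolding unambiguous_def by blast+
    have setv: "x \<in> vecs A m" if "xs \<in> C" "x \<in> set xs" for xs x
      using that Cs by (auto simp: in_set_conv_nth)
    define C2 where "C2 = map perm ` C"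
    have inv: "map unperm (map perm xs) = xs" if "xs \<in> C" for xs
      using that setv up by (auto simp: vecs_def intro: map_idI)
    have inj: "inj_on (map perm) C" by (rule inj_on_inverseI[where g="map unperm"]) (rule inv)
    have fan: "unQ z \<in> fanout A m t Phi x" if x: "x \<in> vecs A m" and z: "z \<in> fanout A m t Phi2 (perm x)" for x z
    proof -
      obtain y where y: "z = Phi2 y" "y \<in> vecs A m" "hamming (perm x) y \<le> t"
        using z unfolding fanout_def by blast
      have "unQ z = Phi (unperm y)" using y(1) Phiv[OF unpermv[OF y(2)]]
        by (simp add: Phi2_def uQ vecs_def)
      moreover have "hamming x (unperm y) \<le> t" using ham x y by (simp add: vecs_def)
      ultimately show ?thesis using unpermv[OF y(2)] unfolding fanout_def by blast
    qed
    have "unambiguous A m t Phi2 i C2"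
      unfolding unambiguous_def
    proof (intro conjI ballI impI)
      show "C2 \<noteq> {}" using Cne C2_def by simp
      show "C2 \<subseteq> {xs. length xs = i \<and> (\<forall>k < i. xs ! k \<in> vecs A m)}"
        using Cs permv unfolding C2_def by auto
    next
      fix xs2 ys2 assume xs2: "xs2 \<in> C2" and ys2: "ys2 \<in> C2" and ne: "xs2 \<noteq> ys2"
      obtain xs ys where xs: "xs \<in> C" "xs2 = map perm xs" and ys: "ys \<in> C" "ys2 = map perm ys"
        using xs2 ys2 C2_def by blast
      have ne': "xs \<noteq> ys" using ne xs ys by blast
      show "fanout_uses A m t Phi2 xs2 \<inter> fanout_uses A m t Phi2 ys2 = {}"
      proof (rule ccontr)
        assume "fanout_uses A m t Phi2 xs2 \<inter> fanout_uses A m t Phi2 ys2 \<noteq> {}"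
        then obtain zs where zx: "zs \<in> fanout_uses A m t Phi2 xs2" and zy: "zs \<in> fanout_uses A m t Phi2 ys2"
          by blast
        have lx: "length xs = i" "length ys = i" using xs ys Cs by auto
        have "map unQ zs \<in> fanout_uses A m t Phi xs"
          unfolding fanout_uses_def
        proof (intro CollectI conjI allI impI)
          show "length (map unQ zs) = length xs" using zx xs unfolding fanout_uses_def by simp
          fix k assume k: "k < length xs"
          have "zs ! k \<in> fanout A m t Phi2 (perm (xs ! k))" using zx xs k unfolding fanout_uses_def by auto
          moreover have "xs ! k \<in> vecs A m" using setv xs k by auto
          moreover have "k < length zs" using zx xs k unfolding fanout_uses_def by auto
          ultimately show "map unQ zs ! k \<in> fanout A m t Phi (xs ! k)" using fan by simp
        qed
        moreover have "map unQ zs \<in> fanout_uses A m t Phi ys"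
          unfolding fanout_uses_def
        proof (intro CollectI conjI allI impI)
          show "length (map unQ zs) = length ys" using zy ys unfolding fanout_uses_def by simp
          fix k assume k: "k < length ys"
          have "zs ! k \<in> fanout A m t Phi2 (perm (ys ! k))" using zy ys k unfolding fanout_uses_def by auto
          moreover have "ys ! k \<in> vecs A m" using setv ys k by auto
          moreover have "k < length zs" using zy ys k unfolding fanout_uses_def by auto
          ultimately show "map unQ zs ! k \<in> fanout A m t Phi (ys ! k)" using fan by simp
        qed
        ultimately show False using Cd[OF xs(1) ys(1) ne'] by blast
      qed
    qed
    moreover have "card C2 = card C" unfolding C2_def using inj by (rule card_image)
    ultimately show ?thesis using P2 by blast
  qed
  define S3 where "S3 = {log (real (card A)) (real (card C)) / real i | Phi C.
            Phi \<in> codes3 A s3 m3 t3 \<and> unambiguous A (length s3) t Phi i C}"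
  define S2 where "S2 = {log (real (card A)) (real (card C)) / real i | Phi C.
            Phi \<in> codes2 A s2 t2 \<and> unambiguous A (length s2) t Phi i C}"
  have sub: "S3 \<subseteq> S2"
  proof
    fix v assume "v \<in> S3"
    then obtain Phi C where v: "v = log (real (card A)) (real (card C)) / real i"
      and PC: "Phi \<in> codes3 A s3 m3 t3" "unambiguous A m t Phi i C" unfolding S3_def m_def by blast
    from claim[OF PC] obtain Phi2 C2 where P2: "Phi2 \<in> codes2 A s2 t2"
      and U2: "unambiguous A m t Phi2 i C2" and cc: "card C2 = card C"
      by blast
    have U2': "unambiguous A (length s2) t Phi2 i C2" using U2 ls2 by simp
    have v2: "v = log (real (card A)) (real (card C2)) / real i" using v cc by simp
    show "v \<in> S2" unfolding S2_def using P2 U2' v2 by blast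
  qed
  obtain a where a: "a \<in> A" using assms(2) by fastforce
  define Phi0 where "Phi0 = (\<lambda>x::'a list. replicate (length t3) a) \<circ> (\<lambda>x::'a list. replicate (length (map fst m3)) a)"
  define C0 where "C0 = {replicate i (replicate (length s3) a)}"
  have "Phi0 \<in> codes3 A s3 m3 t3"
    unfolding codes3_def Phi0_def using const_layer[OF a] by blast
  moreover have "unambiguous A (length s3) t Phi0 i C0"
    unfolding unambiguous_def vecs_def C0_def using a by auto
  ultimately have "log (real (card A)) (real (card C0)) / real i \<in> S3" unfolding S3_def by blast
  then have ne: "S3 \<noteq> {}" by blast
  define U where "U = {xs. length xs = i \<and> (\<forall>k < i. xs ! k \<in> vecs A (length s2))}"
  have "S2 \<subseteq> (\<lambda>C. log (real (card A)) (real (card C)) / real i) ` Pow U"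
  proof
    fix v assume "v \<in> S2"
    then obtain Phi C where v: "v = log (real (card A)) (real (card C)) / real i"
      and U: "unambiguous A (length s2) t (Phi :: 'a list \<Rightarrow> 'a list) i C" unfolding S2_def by blast
    have "C \<in> Pow U" using U unfolding unambiguous_def U_def by simp
    then show "v \<in> (\<lambda>C. log (real (card A)) (real (card C)) / real i) ` Pow U"
      using v by (rule rev_image_eqI)
  qed
  moreover have "finite (Pow U)"
    unfolding U_def using finite_codes[OF assms(1)] by (rule finite_Pow_iff[THEN iffD2])
  ultimately have fin: "finite S2" using finite_subset by blast
  have "Max S3 \<le> Max S2" using Max_mono[OF sub ne fin] .
  then show ?thesis unfolding capacity_def S3_def S2_def .
qed

end
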